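(* Let $G$ be a group and $\tau\in G$. Define $\mathrm{var}(x)=\tau^{-1}x^{-1}\tau x$, $\mathfrak{C}_1(\tau)=\{x\in G:\mathrm{var}(x)=\mathrm{id}\}$ and $\mathfrak{C}_2(\tau)=\{x\in G:\mathrm{var}(x)\in\mathfrak{C}_1(\tau)\}$. Let $x,y\in\mathfrak{C}_2(\tau)$. Then: (1) $x^{-1}\in\mathfrak{C}_2(\tau)$; (2) $\mathrm{var}(x)$ and $\mathrm{var}(y^{-1})$ commute if and only if $xy\in\mathfrak{C}_2(\tau)$; (3) $\mathrm{var}(x)=\mathrm{var}(y^{-1})$ if and only if $xy\in\mathfrak{C}_1(\tau)$. *)

theory Defs
  imports "HOL-Algebra.Group"
begin

definition var :: "('a, 'b) monoid_scheme \<Rightarrow> 'a \<Rightarrow> 'a \<Rightarrow> 'a" where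
  "var G \<tau> x = inv\<^bsub>G\<^esub> \<tau> \<otimes>\<^bsub>G\<^esub> inv\<^bsub>G\<^esub> x \<otimes>\<^bsub>G\<^esub> \<tau> \<otimes>\<^bsub>G\<^esub> x"

definition C1 :: "('a, 'b) monoid_scheme \<Rightarrow> 'a \<Rightarrow> 'a set" where
  "C1 G \<tau> = {x \<in> carrier G. var G \<tau> x = \<one>\<^bsub>G\<^esub>}"

definition C2 :: "('a, 'b) monoid_scheme \<Rightarrow> 'a \<Rightarrow> 'a set" where
  "C2 G \<tau> = {x \<in> carrier G. var G \<tau> x \<in> C1 G \<tau>}"

end

theory Submission
  imports Defs
begin

context group
begin

lemma canc1: "x \<in> carrier G \<Longrightarrow> y \<in> carrier G \<Longrightarrow> x \<otimes> (inv x \<otimes> y) = y"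
  by (simp add: m_assoc[symmetric])
lemma canc2: "x \<in> carrier G \<Longrightarrow> y \<in> carrier G \<Longrightarrow> inv x \<otimes> (x \<otimes> y) = y"
  by (simp add: m_assoc[symmetric])

definition cj :: "'a \<Rightarrow> 'a \<Rightarrow> 'a" where "cj t u = inv t \<otimes> u \<otimes> t"

lemma cj_carr: "t \<in> carrier G \<Longrightarrow> u \<in> carrier G \<Longrightarrow> cj t u \<in> carrier G"
  by (simp add: cj_def)

lemma cj_mult: "t \<in> carrier G \<Longrightarrow> u \<in> carrier G \<Longrightarrow> v \<in> carrier G \<Longrightarrow>
  cj t (u \<otimes> v) = cj t u \<otimes> cj t v"
  by (simp add: cj_def m_assoc canc1 canc2)

lemma cj_inv: "t \<in> carrier G \<Longrightarrow> u \<in> carrier G \<Longrightarrow> cj t (inv u) = inv (cj t u)"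
  by (simp add: cj_def m_assoc inv_mult_group)

lemma cj_fix: "t \<in> carrier G \<Longrightarrow> u \<in> carrier G \<Longrightarrow> cj t u = u \<longleftrightarrow> u \<otimes> t = t \<otimes> u"
  unfolding cj_def
  by (metis inv_closed inv_solve_left m_assoc m_closed)

lemma var_cj: "t \<in> carrier G \<Longrightarrow> u \<in> carrier G \<Longrightarrow> var G t u = inv (cj t u) \<otimes> u"
  by (simp add: cj_def var_def m_assoc inv_mult_group canc1 canc2)

lemma cj_var: "t \<in> carrier G \<Longrightarrow> u \<in> carrier G \<Longrightarrow> cj t u = u \<otimes> inv (var G t u)"
  by (simp add: cj_def var_def m_assoc inv_mult_group canc1 canc2)

lemma var_carr: "t \<in> carrier G \<Longrightarrow> u \<in> carrier G \<Longrightarrow> var G t u \<in> carrier G"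
  by (simp add: var_def)

lemma C1_iff: "t \<in> carrier G \<Longrightarrow> u \<in> carrier G \<Longrightarrow> u \<in> C1 G t \<longleftrightarrow> cj t u = u"
proof -
  assume a: "t \<in> carrier G" "u \<in> carrier G"
  have "var G t u = \<one> \<longleftrightarrow> inv (cj t u) \<otimes> u = \<one>" using var_cj[OF a] by simp
  also have "\<dots> \<longleftrightarrow> cj t u = u"
    by (metis a cj_carr inv_closed inv_inv inv_equality r_inv)
  finally show ?thesis using a unfolding C1_def by simp
qed

lemma eq_iff2: "u \<in> carrier G \<Longrightarrow> v \<in> carrier G \<Longrightarrow> w \<in> carrier G \<Longrightarrow> z \<in> carrier G \<Longrightarrow>
  u = v \<longleftrightarrow> w \<otimes> u \<otimes> z = w \<otimes> v \<otimes> z"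
  by (simp add: m_assoc)

lemma main:
  assumes t: "t \<in> carrier G" and x: "x \<in> carrier G" and y: "y \<in> carrier G"
    and ca: "cj t (var G t x) = var G t x" and cb: "cj t (var G t y) = var G t y"
  shows "cj t (var G t (inv x)) = var G t (inv x)
    \<and> ((var G t x \<otimes> var G t (inv y) = var G t (inv y) \<otimes> var G t x)
           \<longleftrightarrow> cj t (var G t (x \<otimes> y)) = var G t (x \<otimes> y))
    \<and> ((var G t x = var G t (inv y)) \<longleftrightarrow> var G t (x \<otimes> y) = \<one>)"
proof -
  define a where "a = var G t x"
  define b where "b = var G t y"
  have a: "a \<in> carrier G" and b: "b \<in> carrier G" using var_carr t x y a_def b_def by auto
  have cx: "cj t x = x \<otimes> inv a" using cj_var[OF t x] a_def by simp
  have cy: "cj t y = y \<otimes> inv b" using cj_var[OF t y] b_def by simp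
  have ca': "cj t a = a" using ca a_def by simp
  have cb': "cj t b = b" using cb b_def by simp
  have c: "var G t (inv x) = x \<otimes> inv a \<otimes> inv x"
    using var_cj[OF t inv_closed[OF x]] cj_inv[OF t x] cx x a by (simp add: m_assoc)
  have c': "var G t (inv y) = y \<otimes> inv b \<otimes> inv y"
    using var_cj[OF t inv_closed[OF y]] cj_inv[OF t y] cy y b by (simp add: m_assoc)
  have d: "var G t (x \<otimes> y) = b \<otimes> inv y \<otimes> a \<otimes> y"
    using var_cj[OF t m_closed[OF x y]] cj_mult[OF t x y] cx cy x y a b
    by (simp add: m_assoc inv_mult_group canc1 canc2)
  have P1: "cj t (var G t (inv x)) = var G t (inv x)"
    unfolding c using cj_mult cj_inv t x a cx ca' by (simp add: m_assoc inv_mult_group canc1 canc2)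
  have cd: "cj t (var G t (x \<otimes> y)) = b \<otimes> b \<otimes> inv y \<otimes> a \<otimes> y \<otimes> inv b"
    unfolding d using cj_mult cj_inv t y a b cy ca' cb' by (simp add: m_assoc inv_mult_group canc1 canc2)
  have "(cj t (var G t (x \<otimes> y)) = var G t (x \<otimes> y)) \<longleftrightarrow>
     inv b \<otimes> (b \<otimes> b \<otimes> inv y \<otimes> a \<otimes> y \<otimes> inv b) \<otimes> b = inv b \<otimes> (b \<otimes> inv y \<otimes> a \<otimes> y) \<otimes> b"
    unfolding d cd[unfolded d] using a b y by (intro eq_iff2) auto
  also have "\<dots> \<longleftrightarrow> b \<otimes> inv y \<otimes> a \<otimes> y = inv y \<otimes> a \<otimes> y \<otimes> b"
    using a b y by (simp add: m_assoc canc1 canc2)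
  also have "\<dots> \<longleftrightarrow> y \<otimes> (b \<otimes> inv y \<otimes> a \<otimes> y) \<otimes> inv y = y \<otimes> (inv y \<otimes> a \<otimes> y \<otimes> b) \<otimes> inv y"
    using a b y by (intro eq_iff2) auto
  also have "\<dots> \<longleftrightarrow> y \<otimes> b \<otimes> inv y \<otimes> a = a \<otimes> y \<otimes> b \<otimes> inv y"
    using a b y by (simp add: m_assoc canc1 canc2)
  also have "\<dots> \<longleftrightarrow> (y \<otimes> inv b \<otimes> inv y) \<otimes> (y \<otimes> b \<otimes> inv y \<otimes> a) \<otimes> (y \<otimes> inv b \<otimes> inv y)
      = (y \<otimes> inv b \<otimes> inv y) \<otimes> (a \<otimes> y \<otimes> b \<otimes> inv y) \<otimes> (y \<otimes> inv b \<otimes> inv y)"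
    using a b y by (intro eq_iff2) auto
  also have "\<dots> \<longleftrightarrow> a \<otimes> (y \<otimes> inv b \<otimes> inv y) = (y \<otimes> inv b \<otimes> inv y) \<otimes> a"
    using a b y by (simp add: m_assoc canc1 canc2)
  finally have P2: "(a \<otimes> var G t (inv y) = var G t (inv y) \<otimes> a) \<longleftrightarrow>
      cj t (var G t (x \<otimes> y)) = var G t (x \<otimes> y)" unfolding c' by simp
  have "var G t (x \<otimes> y) = \<one> \<longleftrightarrow> y \<otimes> inv b \<otimes> var G t (x \<otimes> y) \<otimes> inv y = y \<otimes> inv b \<otimes> \<one> \<otimes> inv y"
    using a b y var_carr t x by (intro eq_iff2) auto
  also have "\<dots> \<longleftrightarrow> a = y \<otimes> inv b \<otimes> inv y"
    unfolding d using a b y by (simp add: m_assoc canc1 canc2)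
  finally have P3: "(a = var G t (inv y)) \<longleftrightarrow> var G t (x \<otimes> y) = \<one>" unfolding c' by simp
  show ?thesis using P1 P2 P3 a_def by simp
qed

end

theorem lemmaA2:
  fixes G (structure)
  assumes "group G" and "\<tau> \<in> carrier G"
    and "x \<in> C2 G \<tau>" and "y \<in> C2 G \<tau>"
  shows "inv x \<in> C2 G \<tau>
    \<and> ((var G \<tau> x \<otimes> var G \<tau> (inv y) = var G \<tau> (inv y) \<otimes> var G \<tau> x)
           \<longleftrightarrow> x \<otimes> y \<in> C2 G \<tau>)
    \<and> ((var G \<tau> x = var G \<tau> (inv y)) \<longleftrightarrow> x \<otimes> y \<in> C1 G \<tau>)"
proof -
  interpret group G by fact
  have x: "x \<in> carrier G" and y: "y \<in> carrier G" using assms(3,4) unfolding C2_def by auto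
  have ca: "cj \<tau> (var G \<tau> x) = var G \<tau> x" using assms(3) C1_iff[OF assms(2) var_carr[OF assms(2) x]]
    unfolding C2_def by auto
  have cb: "cj \<tau> (var G \<tau> y) = var G \<tau> y" using assms(4) C1_iff[OF assms(2) var_carr[OF assms(2) y]]
    unfolding C2_def by auto
  note M = main[OF assms(2) x y ca cb]
  have i: "inv x \<in> carrier G" and xy: "x \<otimes> y \<in> carrier G" using x y by auto
  show ?thesis using M
    C1_iff[OF assms(2) var_carr[OF assms(2) i]] C1_iff[OF assms(2) var_carr[OF assms(2) xy]]
    i xy var_carr[OF assms(2) xy] unfolding C2_def C1_def by auto
qed

end
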